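(* Let $G$ be a bipartite graph and let $M$ be a maximum matching in $G$. Then $\alpha(G-M)\le \mathrm{diss}(G)\le \frac{4}{3}\alpha(G-M)$.
   Context: All graphs are finite, simple and undirected. A set $I$ of vertices of a graph $G$ is a dissociation set if the induced subgraph $G[I]$ has maximum degree at most $1$; $\mathrm{diss}(G)$ is the maximum order of a dissociation set in $G$. $\alpha(H)$ denotes the independence number of $H$. For a set $M$ of edges, $G-M$ is the graph on $V(G)$ with edge set $E(G)\setminus M$. *)

theory Defs
  imports Complex_Main
begin

definition graph :: "'a set \<Rightarrow> 'a set set \<Rightarrow> bool" where
  "graph V E \<longleftrightarrow> finite V \<and> (\<forall>e\<in>E. e \<subseteq> V \<and> card e = 2)"

definition bipartite :: "'a set \<Rightarrow> 'a set set \<Rightarrow> bool" where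
  "bipartite V E \<longleftrightarrow> (\<exists>A B. A \<union> B = V \<and> A \<inter> B = {} \<and>
      (\<forall>e\<in>E. card (e \<inter> A) = 1 \<and> card (e \<inter> B) = 1))"

definition matching :: "'a set set \<Rightarrow> 'a set set \<Rightarrow> bool" where
  "matching E M \<longleftrightarrow> M \<subseteq> E \<and> (\<forall>e\<in>M. \<forall>f\<in>M. e \<noteq> f \<longrightarrow> e \<inter> f = {})"

definition maximum_matching :: "'a set set \<Rightarrow> 'a set set \<Rightarrow> bool" where
  "maximum_matching E M \<longleftrightarrow> matching E M \<and> (\<forall>M'. matching E M' \<longrightarrow> card M' \<le> card M)"

definition induced_degree :: "'a set set \<Rightarrow> 'a set \<Rightarrow> 'a \<Rightarrow> nat" where
  "induced_degree E S v = card {u\<in>S. {u, v} \<in> E}"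

definition independent_set :: "'a set \<Rightarrow> 'a set set \<Rightarrow> 'a set \<Rightarrow> bool" where
  "independent_set V E I \<longleftrightarrow> I \<subseteq> V \<and> (\<forall>e\<in>E. \<not> e \<subseteq> I)"

definition dissociation_set :: "'a set \<Rightarrow> 'a set set \<Rightarrow> 'a set \<Rightarrow> bool" where
  "dissociation_set V E I \<longleftrightarrow> I \<subseteq> V \<and> (\<forall>v\<in>I. induced_degree E I v \<le> 1)"

definition alpha :: "'a set \<Rightarrow> 'a set set \<Rightarrow> nat" where
  "alpha V E = Max (card ` {I. independent_set V E I})"

definition diss :: "'a set \<Rightarrow> 'a set set \<Rightarrow> nat" where
  "diss V E = Max (card ` {I. dissociation_set V E I})"

end

theory Submission
  imports Defs
begin

lemma hall:
  assumes "finite A" "\<forall>a\<in>A. finite (G a)" "\<forall>T\<subseteq>A. card T \<le> card (\<Union>(G ` T))"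
  shows "\<exists>f. inj_on f A \<and> (\<forall>a\<in>A. f a \<in> G a)"
  using assms
proof (induction "card A" arbitrary: A G rule: less_induct)
  case less
  show ?case
  proof (cases "A = {}")
    case True then show ?thesis by auto
  next
    case False
    show ?thesis
    proof (cases "\<exists>T. T \<noteq> {} \<and> T \<subset> A \<and> card (\<Union>(G ` T)) \<le> card T")
      case True
      then obtain T where T: "T \<noteq> {}" "T \<subset> A" "card (\<Union>(G ` T)) \<le> card T" by blast
      have finT: "finite T" using T(2) less.prems(1) finite_subset by blast
      have "card T < card A" using T(2) less.prems(1) psubset_card_mono by blast
      moreover have "\<forall>a\<in>T. finite (G a)" "\<forall>U\<subseteq>T. card U \<le> card (\<Union>(G ` U))"
        using less.prems T(2) by auto
      ultimately obtain f1 where f1: "inj_on f1 T" "\<forall>a\<in>T. f1 a \<in> G a"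
        using less.hyps[of T G] finT by blast
      define G2 where "G2 = (\<lambda>x. G x - \<Union>(G ` T))"
      have finA: "finite A" using less.prems by auto
      have cT: "card (A - T) = card A - card T" using finT T(2) card_Diff_subset psubset_imp_subset by blast
      have "card T > 0" using finT T(1) by auto
      then have "card (A - T) < card A" using cT \<open>card T < card A\<close> by linarith
      moreover have "\<forall>a\<in>A-T. finite (G2 a)" using less.prems by (auto simp: G2_def)
      moreover have "\<forall>U\<subseteq>A-T. card U \<le> card (\<Union>(G2 ` U))"
      proof (intro allI impI)
        fix U assume U: "U \<subseteq> A - T"
        have finU: "finite U" using U finA finite_subset by blast
        have fin1: "finite (\<Union>(G2 ` U))" using finU less.prems U unfolding G2_def by (intro finite_UN_I) auto
        have fin2: "finite (\<Union>(G ` T))" using finT less.prems T(2) by auto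
        have eq: "\<Union>(G ` (U \<union> T)) = \<Union>(G2 ` U) \<union> \<Union>(G ` T)" by (auto simp: G2_def)
        have disj: "\<Union>(G2 ` U) \<inter> \<Union>(G ` T) = {}" by (auto simp: G2_def)
        have "card U + card T = card (U \<union> T)" using U finU finT by (subst card_Un_disjoint) auto
        also have "\<dots> \<le> card (\<Union>(G ` (U \<union> T)))" using less.prems(3) U T(2) by (meson Diff_subset Un_least dual_order.trans psubset_imp_subset)
        also have "\<dots> = card (\<Union>(G2 ` U)) + card (\<Union>(G ` T))" using eq disj fin1 fin2 card_Un_disjoint by simp
        finally show "card U \<le> card (\<Union>(G2 ` U))" using T(3) by simp
      qed
      ultimately obtain f2 where f2: "inj_on f2 (A - T)" "\<forall>a\<in>A-T. f2 a \<in> G2 a"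
        using less.hyps[of "A - T" G2] finA by blast
      define f where "f = (\<lambda>x. if x \<in> T then f1 x else f2 x)"
      have "inj_on f A"
        unfolding inj_on_def
      proof (intro ballI impI)
        fix x y assume xy: "x \<in> A" "y \<in> A" "f x = f y"
        show "x = y"
        proof (cases "x \<in> T"; cases "y \<in> T")
          assume "x \<in> T" "y \<in> T" then show ?thesis using xy f1(1) by (auto simp: f_def inj_on_def)
        next
          assume "x \<notin> T" "y \<notin> T" then show ?thesis using xy f2(1) by (auto simp: f_def inj_on_def)
        next
          assume a: "x \<in> T" "y \<notin> T"
          have "f x \<in> \<Union>(G ` T)" using a f1 by (auto simp: f_def)
          moreover have "f y \<notin> \<Union>(G ` T)" using a xy(2) f2(2) by (simp add: f_def G2_def)
          ultimately show ?thesis using xy by simp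
        next
          assume a: "x \<notin> T" "y \<in> T"
          have "f y \<in> \<Union>(G ` T)" using a f1 by (auto simp: f_def)
          moreover have "f x \<notin> \<Union>(G ` T)" using a xy(1) f2(2) by (simp add: f_def G2_def)
          ultimately show ?thesis using xy by simp
        qed
      qed
      moreover have "\<forall>a\<in>A. f a \<in> G a" using f1 f2 by (auto simp: f_def G2_def)
      ultimately show ?thesis by blast
    next
      case False
      then have strict: "\<And>T. T \<noteq> {} \<Longrightarrow> T \<subset> A \<Longrightarrow> card T < card (\<Union>(G ` T))"
        by (meson not_le)
      have finA: "finite A" using less.prems by auto
      obtain a where a: "a \<in> A" using \<open>A \<noteq> {}\<close> by blast
      have "card {a} \<le> card (\<Union>(G ` {a}))" using less.prems(3) a by blast
      then have "G a \<noteq> {}" by auto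
      then obtain b where b: "b \<in> G a" by blast
      define G' where "G' = (\<lambda>x. G x - {b})"
      have "card (A - {a}) < card A" using a finA by (meson card_Diff1_less)
      moreover have "\<forall>x\<in>A-{a}. finite (G' x)" using less.prems by (auto simp: G'_def)
      moreover have "\<forall>T\<subseteq>A-{a}. card T \<le> card (\<Union>(G' ` T))"
      proof (intro allI impI)
        fix T assume T: "T \<subseteq> A - {a}"
        show "card T \<le> card (\<Union>(G' ` T))"
        proof (cases "T = {}")
          case True then show ?thesis by simp
        next
          case False
          have "T \<subset> A" using T a by auto
          then have "card T < card (\<Union>(G ` T))" using strict False by blast
          moreover have "\<Union>(G' ` T) = \<Union>(G ` T) - {b}" by (auto simp: G'_def)
          moreover have "card (\<Union>(G ` T)) - card {b} \<le> card (\<Union>(G ` T) - {b})"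
            by (rule diff_card_le_card_Diff) simp
          ultimately show ?thesis by simp
        qed
      qed
      ultimately obtain f' where f': "inj_on f' (A - {a})" "\<forall>x\<in>A-{a}. f' x \<in> G' x"
        using less.hyps[of "A - {a}" G'] finA by blast
      define f where "f = f'(a := b)"
      have "inj_on f (A - {a})" using f'(1) by (simp add: f_def inj_on_def)
      moreover have "f a \<notin> f ` (A - {a})" using f'(2) by (auto simp: f_def G'_def)
      ultimately have "inj_on f (insert a (A - {a}))" using inj_on_insert[of f a "A - {a}"] by blast
      then have "inj_on f A" using a by (metis insert_Diff)
      moreover have "\<forall>x\<in>A. f x \<in> G x" using f'(2) b by (auto simp: f_def G'_def)
      ultimately show ?thesis by blast
    qed
  qed
qed


lemma edge_pair:
  assumes "graph V E" "e \<in> E"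
  shows "\<exists>x y. e = {x,y} \<and> x \<noteq> y \<and> x \<in> V \<and> y \<in> V"
proof -
  have "e \<subseteq> V" "card e = 2" using assms by (auto simp: graph_def)
  then show ?thesis by (auto simp: card_2_iff)
qed

lemma finite_edges:
  assumes "graph V E" shows "finite E"
proof -
  have "E \<subseteq> Pow V" using assms by (auto simp: graph_def)
  moreover have "finite V" using assms by (auto simp: graph_def)
  ultimately show ?thesis by (meson finite_Pow_iff finite_subset)
qed

lemma diss_disjoint:
  assumes g: "graph V E" and D: "dissociation_set V E D"
    and e: "e \<in> E" "e \<subseteq> D" and f: "f \<in> E" "f \<subseteq> D" and ne: "e \<noteq> f"
  shows "e \<inter> f = {}"
proof (rule ccontr)
  assume "e \<inter> f \<noteq> {}"
  then obtain v where v: "v \<in> e" "v \<in> f" by blast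
  obtain x y where xy: "e = {x,y}" "x \<noteq> y" using edge_pair[OF g e(1)] by blast
  obtain u where u: "e = {u,v}" "u \<noteq> v" using xy v(1) by (metis insert_commute insertE singletonD)
  obtain x' y' where xy': "f = {x',y'}" "x' \<noteq> y'" using edge_pair[OF g f(1)] by blast
  obtain w where w: "f = {w,v}" "w \<noteq> v" using xy' v(2) by (metis insert_commute insertE singletonD)
  have uw: "u \<noteq> w" using u w ne by auto
  have vD: "v \<in> D" using v e by auto
  have finD: "finite D" using D g by (auto simp: dissociation_set_def graph_def intro: finite_subset)
  have "induced_degree E D v \<le> 1" using D vD by (auto simp: dissociation_set_def)
  then have "card {z\<in>D. {z, v} \<in> E} \<le> Suc 0" by (simp add: induced_degree_def)
  moreover have "finite {z\<in>D. {z, v} \<in> E}" using finD by auto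
  ultimately have "\<forall>a\<in>{z\<in>D. {z, v} \<in> E}. \<forall>b\<in>{z\<in>D. {z, v} \<in> E}. a = b"
    using card_le_Suc0_iff_eq by blast
  moreover have "u \<in> {z\<in>D. {z, v} \<in> E}" "w \<in> {z\<in>D. {z, v} \<in> E}"
    using u w e f by auto
  ultimately show False using uw by blast
qed

lemma out_edges:
  assumes g: "graph V E" and M: "matching E M"
  shows "card {e\<in>M. \<not> e \<subseteq> D} \<le> card (V - D)"
proof -
  define h where "h = (\<lambda>e. SOME x. x \<in> e \<and> x \<notin> D)"
  have hp: "h e \<in> e \<and> h e \<notin> D" if "e \<in> M" "\<not> e \<subseteq> D" for e
    unfolding h_def by (rule someI_ex) (use that in auto)
  have "inj_on h {e\<in>M. \<not> e \<subseteq> D}"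
  proof (rule inj_onI)
    fix e f assume "e \<in> {e\<in>M. \<not> e \<subseteq> D}" "f \<in> {e\<in>M. \<not> e \<subseteq> D}" "h e = h f"
    then show "e = f" using hp[of e] hp[of f] M by (auto simp: matching_def)
  qed
  moreover have "h ` {e\<in>M. \<not> e \<subseteq> D} \<subseteq> V - D"
  proof
    fix y assume "y \<in> h ` {e\<in>M. \<not> e \<subseteq> D}"
    then obtain e where e: "e \<in> M" "\<not> e \<subseteq> D" "y = h e" by auto
    have "e \<subseteq> V" using e(1) M g by (auto simp: matching_def graph_def)
    then show "y \<in> V - D" using hp[OF e(1,2)] e(3) by auto
  qed
  moreover have "finite V" using g by (auto simp: graph_def)
  ultimately show ?thesis by (meson card_inj_on_le finite_Diff)
qed

lemma counting:
  assumes g: "graph V E" and D: "dissociation_set V E D"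
    and M: "matching E M" and N: "matching E N" and disj: "M \<inter> N = {}"
  shows "2 * card M + 2 * card N + 3 * card D \<le> 4 * card V"
proof -
  have finE: "finite E" by (rule finite_edges[OF g])
  have finM: "finite M" and finN: "finite N" using M N finE by (auto simp: matching_def intro: finite_subset)
  have finV: "finite V" using g by (auto simp: graph_def)
  have DV: "D \<subseteq> V" using D by (auto simp: dissociation_set_def)
  define F where "F = {e \<in> M \<union> N. e \<subseteq> D}"
  have finF: "finite F" using finM finN by (auto simp: F_def)
  have FE: "F \<subseteq> E" using M N by (auto simp: F_def matching_def)
  have pw: "pairwise disjnt F"
    unfolding pairwise_def disjnt_def
  proof (intro ballI impI)
    fix e f assume "e \<in> F" "f \<in> F" "e \<noteq> f"
    then show "e \<inter> f = {}" using diss_disjoint[OF g D] FE by (auto simp: F_def)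
  qed
  have c2: "\<And>e. e \<in> F \<Longrightarrow> card e = 2" using FE g by (auto simp: graph_def)
  have fine: "\<And>e. e \<in> F \<Longrightarrow> finite e"
  proof -
    fix e assume "e \<in> F"
    then have "card e = 2" by (rule c2)
    then show "finite e" by (intro card_ge_0_finite) simp
  qed
  have "card (\<Union>F) = sum card F" using card_Union_disjoint[OF pw fine] by simp
  also have "\<dots> = 2 * card F" using c2 by simp
  finally have cU: "card (\<Union>F) = 2 * card F" .
  have "\<Union>F \<subseteq> D" by (auto simp: F_def)
  moreover have "finite D" using DV finV finite_subset by blast
  ultimately have F1: "2 * card F \<le> card D" using cU card_mono by metis
  have Mo: "card {e\<in>M. \<not> e \<subseteq> D} \<le> card (V - D)" by (rule out_edges[OF g M])
  have No: "card {e\<in>N. \<not> e \<subseteq> D} \<le> card (V - D)" by (rule out_edges[OF g N])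
  have "M \<union> N = F \<union> {e\<in>M. \<not> e \<subseteq> D} \<union> {e\<in>N. \<not> e \<subseteq> D}" by (auto simp: F_def)
  then have "card (M \<union> N) \<le> card F + card {e\<in>M. \<not> e \<subseteq> D} + card {e\<in>N. \<not> e \<subseteq> D}"
    by (metis (no_types, lifting) card_Un_le add_le_mono1 order_trans)
  moreover have "card (M \<union> N) = card M + card N" using finM finN disj card_Un_disjoint by blast
  moreover have "card (V - D) + card D = card V" using DV finV
    by (metis card_Diff_subset card_mono le_add_diff_inverse2 finite_subset)
  ultimately show ?thesis using F1 Mo No by linarith
qed


lemma bip_edge:
  assumes g: "graph V E" and AB: "A \<union> B = V" "A \<inter> B = {}"
    and c: "\<forall>e\<in>E. card (e \<inter> A) = 1 \<and> card (e \<inter> B) = 1" and e: "e \<in> E"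
  shows "\<exists>a b. e = {a,b} \<and> a \<in> A \<and> b \<in> B"
proof -
  obtain a where a: "e \<inter> A = {a}" using c e card_1_singleton_iff by (metis One_nat_def)
  obtain b where b: "e \<inter> B = {b}" using c e card_1_singleton_iff by (metis One_nat_def)
  have "e \<subseteq> V" using g e by (auto simp: graph_def)
  then have "e = (e \<inter> A) \<union> (e \<inter> B)" using AB by blast
  then have "e = {a,b}" using a b by auto
  then show ?thesis using a b by blast
qed

lemma konig:
  assumes g: "graph V E" and bip: "bipartite V E" and FE: "F \<subseteq> E"
  shows "\<exists>N C. matching F N \<and> C \<subseteq> V \<and> (\<forall>e\<in>F. e \<inter> C \<noteq> {}) \<and> card C \<le> card N"
proof -
  obtain A B where AB: "A \<union> B = V" "A \<inter> B = {}"
    and c: "\<forall>e\<in>E. card (e \<inter> A) = 1 \<and> card (e \<inter> B) = 1"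
    using bip by (auto simp: bipartite_def)
  have finV: "finite V" using g by (auto simp: graph_def)
  have finA: "finite A" and finB: "finite B" using AB finV by auto
  have edge: "\<And>e. e \<in> F \<Longrightarrow> \<exists>a b. e = {a,b} \<and> a \<in> A \<and> b \<in> B"
    using bip_edge[OF g AB c] FE by blast
  define \<Gamma> where "\<Gamma> = (\<lambda>a. {b\<in>B. {a,b} \<in> F})"
  have finG: "\<And>S. finite (\<Union>(\<Gamma> ` S))" if "S \<subseteq> A" for S
    using that finA finB by (auto simp: \<Gamma>_def intro: finite_subset)
  have finGS: "finite (\<Union>(\<Gamma> ` S))" for S
    using finB by (rule finite_subset[rotated]) (auto simp: \<Gamma>_def)
  define \<delta> where "\<delta> = (\<lambda>S. int (card S) - int (card (\<Union>(\<Gamma> ` S))))"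
  define m where "m = Max (\<delta> ` Pow A)"
  have finP: "finite (\<delta> ` Pow A)" using finA by simp
  have "m \<in> \<delta> ` Pow A" unfolding m_def using finP by (intro Max_in) auto
  then obtain S0 where S0: "S0 \<subseteq> A" "\<delta> S0 = m" by auto
  have mmax: "\<delta> S \<le> m" if "S \<subseteq> A" for S unfolding m_def using finP that by (intro Max_ge) auto
  have m0: "0 \<le> m" using mmax[of "{}"] by (simp add: \<delta>_def)
  define d where "d = nat m"
  define \<Gamma>' where "\<Gamma>' = (\<lambda>a. Inl ` \<Gamma> a \<union> Inr ` {..<d} :: ('a + nat) set)"
  have hallc: "\<forall>T\<subseteq>A. card T \<le> card (\<Union>(\<Gamma>' ` T))"
  proof (intro allI impI)
    fix T assume T: "T \<subseteq> A"
    show "card T \<le> card (\<Union>(\<Gamma>' ` T))"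
    proof (cases "T = {}")
      case True then show ?thesis by simp
    next
      case False
      then have eq: "\<Union>(\<Gamma>' ` T) = Inl ` \<Union>(\<Gamma> ` T) \<union> Inr ` {..<d}" by (auto simp: \<Gamma>'_def)
      have "card (\<Union>(\<Gamma>' ` T)) = card (Inl ` \<Union>(\<Gamma> ` T) :: ('a + nat) set) + card (Inr ` {..<d} :: ('a + nat) set)"
        unfolding eq by (rule card_Un_disjoint) (use finGS in auto)
      also have "\<dots> = card (\<Union>(\<Gamma> ` T)) + d" by (simp add: card_image)
      finally have "card (\<Union>(\<Gamma>' ` T)) = card (\<Union>(\<Gamma> ` T)) + d" .
      moreover have "\<delta> T \<le> m" using mmax T by blast
      ultimately show ?thesis using m0 by (simp add: \<delta>_def d_def)
    qed
  qed
  have "\<forall>a\<in>A. finite (\<Gamma>' a)" using finB by (auto simp: \<Gamma>'_def \<Gamma>_def intro: finite_subset)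
  then obtain f where f: "inj_on f A" "\<forall>a\<in>A. f a \<in> \<Gamma>' a" using hall[OF finA _ hallc] by blast
  define A0 where "A0 = {a\<in>A. isl (f a)}"
  define gg where "gg = (\<lambda>a. projl (f a))"
  have fA0: "\<And>a. a \<in> A0 \<Longrightarrow> f a = Inl (gg a) \<and> gg a \<in> \<Gamma> a"
  proof -
    fix a assume a: "a \<in> A0"
    then have fa: "f a = Inl (gg a)" by (auto simp: A0_def gg_def)
    moreover have "f a \<in> \<Gamma>' a" using f a by (auto simp: A0_def)
    ultimately show "f a = Inl (gg a) \<and> gg a \<in> \<Gamma> a" by (auto simp: \<Gamma>'_def)
  qed
  have "f ` (A - A0) \<subseteq> Inr ` {..<d}"
  proof
    fix y assume "y \<in> f ` (A - A0)"
    then obtain a where a: "a \<in> A" "a \<notin> A0" "y = f a" by auto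
    then have "\<not> isl (f a)" "f a \<in> \<Gamma>' a" using f by (auto simp: A0_def)
    then show "y \<in> Inr ` {..<d}" using a by (auto simp: \<Gamma>'_def)
  qed
  then have "card (f ` (A - A0)) \<le> card (Inr ` {..<d} :: ('a + nat) set)" by (intro card_mono) auto
  moreover have "card (f ` (A - A0)) = card (A - A0)" using f(1) by (intro card_image) (auto intro: inj_on_subset)
  ultimately have cAA0: "card (A - A0) \<le> d" by (simp add: card_image)
  have A0A: "A0 \<subseteq> A" by (auto simp: A0_def)
  have cA: "card A = card A0 + card (A - A0)" using A0A finA
    by (metis card_Diff_subset card_mono finite_subset le_add_diff_inverse)
  define N where "N = (\<lambda>a. {a, gg a}) ` A0"
  define C where "C = (A - S0) \<union> \<Union>(\<Gamma> ` S0)"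
  have ggB: "\<And>a. a \<in> A0 \<Longrightarrow> gg a \<in> B" using fA0 by (auto simp: \<Gamma>_def)
  have injN: "inj_on (\<lambda>a. {a, gg a}) A0"
  proof (rule inj_onI)
    fix a a' assume a: "a \<in> A0" "a' \<in> A0" "{a, gg a} = {a', gg a'}"
    then have "a \<in> {a', gg a'}" by blast
    moreover have "a \<noteq> gg a'" using a ggB[of a'] AB(2) A0A by auto
    ultimately show "a = a'" by auto
  qed
  have cN: "card N = card A0" unfolding N_def by (rule card_image[OF injN])
  have match: "matching F N"
    unfolding matching_def
  proof (intro conjI ballI impI)
    show "N \<subseteq> F" using fA0 by (auto simp: N_def \<Gamma>_def)
  next
    fix e e' assume "e \<in> N" "e' \<in> N" "e \<noteq> e'"
    then obtain a a' where a: "a \<in> A0" "a' \<in> A0" "e = {a, gg a}" "e' = {a', gg a'}" "a \<noteq> a'"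
      by (auto simp: N_def)
    have "gg a \<noteq> gg a'" using a(1,2,5) fA0 f(1) A0A by (metis inj_onD subsetD)
    moreover have "a \<noteq> gg a'" "a' \<noteq> gg a" using a ggB AB(2) A0A by auto
    ultimately show "e \<inter> e' = {}" using a by auto
  qed
  have CV: "C \<subseteq> V" using AB S0 by (auto simp: C_def \<Gamma>_def)
  have cover: "\<forall>e\<in>F. e \<inter> C \<noteq> {}"
  proof
    fix e assume e: "e \<in> F"
    then obtain a b where ab: "e = {a,b}" "a \<in> A" "b \<in> B" using edge by blast
    show "e \<inter> C \<noteq> {}"
    proof (cases "a \<in> S0")
      case True
      then have "b \<in> \<Union>(\<Gamma> ` S0)" using ab e by (auto simp: \<Gamma>_def)
      then show ?thesis using ab by (auto simp: C_def)
    next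
      case False then show ?thesis using ab by (auto simp: C_def)
    qed
  qed
  have "card C \<le> card (A - S0) + card (\<Union>(\<Gamma> ` S0))" unfolding C_def by (rule card_Un_le)
  moreover have "card (A - S0) = card A - card S0" using S0 finA by (meson card_Diff_subset finite_subset)
  moreover have "card S0 \<le> card A" using S0 finA by (simp add: card_mono)
  moreover have "int d = int (card S0) - int (card (\<Union>(\<Gamma> ` S0)))" using S0 m0 by (simp add: d_def \<delta>_def)
  ultimately have "card C \<le> card A0" using cA cAA0 by linarith
  then have "card C \<le> card N" using cN by simp
  then show ?thesis using match CV cover by blast
qed

lemma indep_is_diss:
  assumes g: "graph V E" and M: "matching E M" and I: "independent_set V (E - M) I"
  shows "dissociation_set V E I"
  unfolding dissociation_set_def
proof (intro conjI ballI)
  show "I \<subseteq> V" using I by (auto simp: independent_set_def)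
  fix v assume v: "v \<in> I"
  have IV: "I \<subseteq> V" using I by (simp add: independent_set_def)
  have finV: "finite V" using g by (simp add: graph_def)
  have finI: "finite I" using finite_subset[OF IV finV] .
  have "\<forall>a\<in>{u\<in>I. {u, v} \<in> E}. \<forall>b\<in>{u\<in>I. {u, v} \<in> E}. a = b"
  proof (intro ballI)
    fix a b assume a: "a \<in> {u\<in>I. {u, v} \<in> E}" and b: "b \<in> {u\<in>I. {u, v} \<in> E}"
    have aI: "{a,v} \<subseteq> I" and aE: "{a,v} \<in> E" using a v by auto
    have bI: "{b,v} \<subseteq> I" and bE: "{b,v} \<in> E" using b v by auto
    have Ia: "\<forall>e\<in>E - M. \<not> e \<subseteq> I" using I unfolding independent_set_def by (rule conjunct2)
    have aM: "{a,v} \<in> M"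
    proof (rule ccontr)
      assume "{a,v} \<notin> M"
      then have "{a,v} \<in> E - M" using aE by simp
      then have "\<not> {a,v} \<subseteq> I" by (rule bspec[OF Ia])
      then show False using aI by simp
    qed
    have bM: "{b,v} \<in> M"
    proof (rule ccontr)
      assume "{b,v} \<notin> M"
      then have "{b,v} \<in> E - M" using bE by simp
      then have "\<not> {b,v} \<subseteq> I" by (rule bspec[OF Ia])
      then show False using bI by simp
    qed
    have Eall: "\<forall>e\<in>E. e \<subseteq> V \<and> card e = 2" using g by (simp add: graph_def)
    have ca: "card {a,v} = 2" using bspec[OF Eall aE] by (rule conjunct2)
    have cb: "card {b,v} = 2" using bspec[OF Eall bE] by (rule conjunct2)
    have av: "a \<noteq> v" using ca by (cases "a = v") auto
    have bv: "b \<noteq> v" using cb by (cases "b = v") auto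
    show "a = b"
    proof (rule ccontr)
      assume "a \<noteq> b"
      then have neq: "{a,v} \<noteq> {b,v}" using av bv by (auto simp: doubleton_eq_iff)
      have Md: "\<forall>e\<in>M. \<forall>f\<in>M. e \<noteq> f \<longrightarrow> e \<inter> f = {}" using M by (simp add: matching_def)
      have emp: "{a,v} \<inter> {b,v} = {}" using bspec[OF bspec[OF Md aM] bM] neq by (rule mp)
      have "v \<in> {a,v} \<inter> {b,v}" by blast
      then show False using emp by (simp only: empty_iff)
    qed
  qed
  moreover have finS: "finite {u\<in>I. {u, v} \<in> E}" using finI by auto
  ultimately have "card {u\<in>I. {u, v} \<in> E} \<le> Suc 0" using card_le_Suc0_iff_eq[OF finS] by blast
  then show "induced_degree E I v \<le> 1" by (simp add: induced_degree_def)
qed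

theorem mainTheorem2:
  fixes V :: "'a set" and E M :: "'a set set"
  assumes "graph V E"
    and "bipartite V E"
    and "maximum_matching E M"
  shows "alpha V (E - M) \<le> diss V E
       \<and> real (diss V E) \<le> 4 / 3 * real (alpha V (E - M))"
proof -
  have g: "graph V E" by fact
  have M: "matching E M" and Mmax: "\<forall>M'. matching E M' \<longrightarrow> card M' \<le> card M"
    using assms(3) by (auto simp: maximum_matching_def)
  have finV: "finite V" using g by (auto simp: graph_def)
  define ind where "ind = {I. independent_set V (E - M) I}"
  define dis where "dis = {I. dissociation_set V E I}"
  have "ind \<subseteq> Pow V" "dis \<subseteq> Pow V"
    by (auto simp: ind_def dis_def independent_set_def dissociation_set_def)
  moreover have "finite (Pow V)" using finV by simp
  ultimately have "finite ind" "finite dis" using finite_subset by blast+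
  then have fin_ind: "finite (card ` ind)" and fin_dis: "finite (card ` dis)" by simp_all
  have emp: "{} \<in> ind"
  proof -
    have "\<forall>e\<in>E - M. \<not> e \<subseteq> {}" using g by (auto simp: graph_def)
    then show ?thesis by (auto simp: ind_def independent_set_def)
  qed
  have sub: "ind \<subseteq> dis" using indep_is_diss[OF g M] by (auto simp: ind_def dis_def)
  have part1: "alpha V (E - M) \<le> diss V E"
    unfolding alpha_def diss_def ind_def[symmetric] dis_def[symmetric]
    using sub emp fin_dis by (intro Max_mono) auto
  have "diss V E \<in> card ` dis" unfolding diss_def dis_def[symmetric]
    using fin_dis sub emp by (intro Max_in) auto
  then obtain D where D: "dissociation_set V E D" "card D = diss V E" by (auto simp: dis_def)
  obtain N C where NC: "matching (E - M) N" "C \<subseteq> V" "\<forall>e\<in>E - M. e \<inter> C \<noteq> {}" "card C \<le> card N"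
    using konig[OF g assms(2), of "E - M"] by blast
  have NE: "matching E N" using NC(1) by (auto simp: matching_def)
  have "card N \<le> card M" using Mmax NE by blast
  moreover have "M \<inter> N = {}" using NC(1) by (auto simp: matching_def)
  then have "2 * card M + 2 * card N + 3 * card D \<le> 4 * card V" using counting[OF g D(1) M NE] by blast
  ultimately have "3 * card D + 4 * card N \<le> 4 * card V" by linarith
  define I where "I = V - C"
  have "card I = card V - card C" unfolding I_def using NC(2) finV
    by (meson card_Diff_subset finite_subset)
  moreover have "card C \<le> card V" using NC(2) finV by (simp add: card_mono)
  ultimately have cI: "card I + card C = card V" by simp
  have key: "3 * card D \<le> 4 * card I" using cI NC(4) \<open>3 * card D + 4 * card N \<le> 4 * card V\<close> by linarith
  have "independent_set V (E - M) I" using NC(3) by (auto simp: independent_set_def I_def)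
  then have "card I \<in> card ` ind" by (auto simp: ind_def)
  then have "card I \<le> alpha V (E - M)" unfolding alpha_def ind_def[symmetric] using fin_ind by (intro Max_ge)
  then have "3 * diss V E \<le> 4 * alpha V (E - M)" using key D(2) by linarith
  then have "real (3 * diss V E) \<le> real (4 * alpha V (E - M))" by (simp only: of_nat_le_iff)
  then have "real (diss V E) \<le> 4 / 3 * real (alpha V (E - M))" by simp
  with part1 show ?thesis by blast
qed

end
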